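(* Let $\{X_t\}_{t\in\mathbb N^+}$ be a real-valued process adapted to a filtration $\{\mathcal F_t\}_{t\in\mathbb N}$ with $\mathcal F_0$ trivial, such that for all $t\in\mathbb N^+$, $\mathbb E[X_t\mid\mathcal F_{t-1}]=\mu$ (an unknown constant) and $\mathbb E[(X_t-\mu)^2\mid\mathcal F_{t-1}]\le\sigma^2$ ($\sigma^2$ known). Let $\alpha\in(0,1)$ and let $\{\lambda_t\}_{t\in\mathbb N^+}$ be any predictable process. Writing each $\sum$ for $\sum_{i=1}^t$, define $$U_t^\pm=\frac{\sum\lambda_i^2X_i}{3}\mp\sum\lambda_i,$$ $$D_t^\pm=(U_t^\pm)^2-\frac{2\sum\lambda_i^2}{3}\left(\log(2/\alpha)\mp\sum\lambda_iX_i+\frac{\sum\lambda_i^2X_i^2+2\sigma^2\sum\lambda_i^2}{6}\right),$$ $$\mathrm{aCI}^{\mathsf{SN}\pm}_t=\left(\frac{U_t^\pm-\sqrt{D_t^\pm}}{\sum\lambda_i^2/3},\ \frac{U_t^\pm+\sqrt{D_t^\pm}}{\sum\lambda_i^2/3}\right)$$ (upper signs for "$+$", lower signs for "$-$"; an interval is taken to be empty when the corresponding $D_t^\pm<0$). Let $\mathrm{CI}^{\mathsf{SN}}_t=\mathbb R\setminus\left(\mathrm{aCI}^{\mathsf{SN}+}_t\cup\mathrm{aCI}^{\mathsf{SN}-}_t\right)$. Then $\Pr[\forall t\in\mathbb N^+,\ \mu\in\mathrm{CI}^{\mathsf{SN}}_t]\ge1-\alpha$.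
   Context: A process $\{\lambda_t\}$ is predictable if each $\lambda_t$ is $\mathcal F_{t-1}$-measurable. *)

theory Defs
  imports "HOL-Probability.Probability"
begin

text \<open>Sign convention: s = 1 gives the "+" quantities, s = -1 the "-" quantities.
  All sums run over i = 1..t.\<close>

definition U_SN :: "real \<Rightarrow> (nat \<Rightarrow> real) \<Rightarrow> (nat \<Rightarrow> real) \<Rightarrow> nat \<Rightarrow> real" where
  "U_SN s lm x t = (\<Sum>i=1..t. (lm i)\<^sup>2 * x i) / 3 - s * (\<Sum>i=1..t. lm i)"

definition D_SN :: "real \<Rightarrow> real \<Rightarrow> real \<Rightarrow> (nat \<Rightarrow> real) \<Rightarrow> (nat \<Rightarrow> real) \<Rightarrow> nat \<Rightarrow> real" where
  "D_SN a sg s lm x t =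
     (U_SN s lm x t)\<^sup>2
     - 2 * (\<Sum>i=1..t. (lm i)\<^sup>2) / 3 *
       (ln (2 / a) - s * (\<Sum>i=1..t. lm i * x i)
        + ((\<Sum>i=1..t. (lm i)\<^sup>2 * (x i)\<^sup>2) + 2 * sg\<^sup>2 * (\<Sum>i=1..t. (lm i)\<^sup>2)) / 6)"

definition aCI_SN :: "real \<Rightarrow> real \<Rightarrow> real \<Rightarrow> (nat \<Rightarrow> real) \<Rightarrow> (nat \<Rightarrow> real) \<Rightarrow> nat \<Rightarrow> real set" where
  "aCI_SN a sg s lm x t =
     (if D_SN a sg s lm x t < 0 then {}
      else {(U_SN s lm x t - sqrt (D_SN a sg s lm x t)) / ((\<Sum>i=1..t. (lm i)\<^sup>2) / 3)
            <..< (U_SN s lm x t + sqrt (D_SN a sg s lm x t)) / ((\<Sum>i=1..t. (lm i)\<^sup>2) / 3)})"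

definition CI_SN :: "real \<Rightarrow> real \<Rightarrow> (nat \<Rightarrow> real) \<Rightarrow> (nat \<Rightarrow> real) \<Rightarrow> nat \<Rightarrow> real set" where
  "CI_SN a sg lm x t = UNIV - (aCI_SN a sg 1 lm x t \<union> aCI_SN a sg (-1) lm x t)"

end

theory Submission
  imports Defs
begin


lemma g_deriv: "((\<lambda>x::real. (1 + x + x^2/3) * exp (- x + x^2/6)) has_real_derivative
   (x^3/9 * exp (- x + x^2/6))) (at x)"
proof -
  have "((\<lambda>x::real. (1 + x + x^2/3) * exp (- x + x^2/6)) has_real_derivative
   ((1 + 2*x/3) * exp (- x + x^2/6) + (1 + x + x^2/3) * (exp (- x + x^2/6) * (-1 + 2*x/6)))) (at x)"
    by (auto intro!: derivative_eq_intros simp: power2_eq_square)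
  moreover have eq: "(1 + 2*x/3) * exp (- x + x^2/6) + (1 + x + x^2/3) * (exp (- x + x^2/6) * (-1 + 2*x/6))
     = x^3/9 * exp (- x + x^2/6)"
    by (simp add: algebra_simps power2_eq_square power3_eq_cube add_divide_distrib)
  ultimately show ?thesis by metis
qed

lemma g_ge1: "1 \<le> (1 + x + x^2/3) * exp (- x + x^2/6)" for x :: real
proof (cases "x \<ge> 0")
  case True
  have "(\<lambda>x::real. (1 + x + x^2/3) * exp (- x + x^2/6)) 0 \<le> (\<lambda>x::real. (1 + x + x^2/3) * exp (- x + x^2/6)) x"
    apply (rule DERIV_nonneg_imp_nondecreasing[OF True])
    subgoal for y
      apply (rule exI[of _ "y^3/9 * exp (- y + y^2/6)"])
      by (rule conjI[OF g_deriv]) simp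
    done
  then show ?thesis by simp
next
  case False
  have "(\<lambda>x::real. (1 + x + x^2/3) * exp (- x + x^2/6)) 0 \<le> (\<lambda>x::real. (1 + x + x^2/3) * exp (- x + x^2/6)) x"
    apply (rule DERIV_nonpos_imp_nonincreasing[of x 0])
    using False apply simp
    subgoal for y
      apply (rule exI[of _ "y^3/9 * exp (- y + y^2/6)"])
      apply (rule conjI[OF g_deriv])
      proof -
        assume "y \<le> 0"
        then have "y^3 \<le> 0" by (simp add: power_le_zero_eq)
        then show "y^3/9 * exp (- y + y^2/6) \<le> 0" by (simp add: mult_nonpos_nonneg)
      qed
    done
  then show ?thesis by simp
qed

lemma key_ineq: "exp (x - x^2/6) \<le> 1 + x + x^2/3" for x :: real
proof -
  have "exp (x - x^2/6) * exp (- x + x^2/6) = 1" by (simp flip: exp_add)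
  with g_ge1[of x] have "exp (x - x^2/6) * exp (- x + x^2/6) \<le> (1 + x + x^2/3) * exp (- x + x^2/6)" by simp
  then show ?thesis by simp
qed




lemma sum_expand:
  fixes s mu sg :: real and lm x :: "nat \<Rightarrow> real"
  shows "(\<Sum>i=1..t. s * lm i * (x i - mu) - (lm i)\<^sup>2 * ((x i - mu)\<^sup>2 + 2 * sg\<^sup>2) / 6)
    = s * (\<Sum>i=1..t. lm i * x i) - s * mu * (\<Sum>i=1..t. lm i)
      - ((\<Sum>i=1..t. (lm i)\<^sup>2 * (x i)\<^sup>2) - 2 * mu * (\<Sum>i=1..t. (lm i)\<^sup>2 * x i)
         + mu\<^sup>2 * (\<Sum>i=1..t. (lm i)\<^sup>2) + 2 * sg\<^sup>2 * (\<Sum>i=1..t. (lm i)\<^sup>2)) / 6"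
proof -
  have "\<And>i. s * lm i * (x i - mu) - (lm i)\<^sup>2 * ((x i - mu)\<^sup>2 + 2 * sg\<^sup>2) / 6
     = s * (lm i * x i) - s * mu * lm i - ((lm i)\<^sup>2 * (x i)\<^sup>2 / 6) + mu / 3 * ((lm i)\<^sup>2 * x i)
       - (mu\<^sup>2 + 2 * sg\<^sup>2) / 6 * (lm i)\<^sup>2"
    by (simp add: power2_eq_square field_simps)
  then have "(\<Sum>i=1..t. s * lm i * (x i - mu) - (lm i)\<^sup>2 * ((x i - mu)\<^sup>2 + 2 * sg\<^sup>2) / 6)
     = (\<Sum>i=1..t. s * (lm i * x i) - s * mu * lm i - ((lm i)\<^sup>2 * (x i)\<^sup>2 / 6) + mu / 3 * ((lm i)\<^sup>2 * x i)
       - (mu\<^sup>2 + 2 * sg\<^sup>2) / 6 * (lm i)\<^sup>2)" by simp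
  also have "\<dots> = s * (\<Sum>i=1..t. lm i * x i) - s * mu * (\<Sum>i=1..t. lm i)
      - (\<Sum>i=1..t. (lm i)\<^sup>2 * (x i)\<^sup>2) / 6 + mu / 3 * (\<Sum>i=1..t. (lm i)\<^sup>2 * x i)
      - (mu\<^sup>2 + 2 * sg\<^sup>2) / 6 * (\<Sum>i=1..t. (lm i)\<^sup>2)"
    by (simp add: sum.distrib sum_subtractf sum_distrib_left sum_divide_distrib)
  finally show ?thesis by (simp add: field_simps)
qed

lemma aCI_imp:
  fixes s mu sg a :: real and lm x :: "nat \<Rightarrow> real"
  assumes "mu \<in> aCI_SN a sg s lm x t"
  shows "ln (2 / a) < (\<Sum>i=1..t. s * lm i * (x i - mu) - (lm i)\<^sup>2 * ((x i - mu)\<^sup>2 + 2 * sg\<^sup>2) / 6)"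
proof -
  define L where "L = (\<Sum>i=1..t. (lm i)\<^sup>2)"
  define U where "U = U_SN s lm x t"
  define D where "D = D_SN a sg s lm x t"
  define C where "C = ln (2 / a) - s * (\<Sum>i=1..t. lm i * x i)
        + ((\<Sum>i=1..t. (lm i)\<^sup>2 * (x i)\<^sup>2) + 2 * sg\<^sup>2 * L) / 6"
  have U: "U = (\<Sum>i=1..t. (lm i)\<^sup>2 * x i) / 3 - s * (\<Sum>i=1..t. lm i)"
    unfolding U_def U_SN_def by simp
  have D: "D = U\<^sup>2 - 2 * L / 3 * C" unfolding D_def D_SN_def C_def L_def U_def by simp
  have L0: "L \<ge> 0" unfolding L_def by (simp add: sum_nonneg)
  have mem: "D \<ge> 0" "(U - sqrt D) / (L/3) < mu" "mu < (U + sqrt D) / (L/3)"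
    using assms unfolding aCI_SN_def U_def D_def L_def by (auto split: if_splits)
  have Lp: "L > 0" using mem L0 by (cases "L = 0") auto
  have "U - sqrt D < L/3 * mu" "L/3 * mu < U + sqrt D"
    using mem(2,3) Lp by (simp_all add: field_simps)
  then have "\<bar>L/3 * mu - U\<bar> < sqrt D" by linarith
  then have "\<bar>L/3 * mu - U\<bar>\<^sup>2 < (sqrt D)\<^sup>2"
    by (rule power_strict_mono) auto
  then have "(L/3 * mu - U)\<^sup>2 < D" using mem(1) by simp
  then have "(L/3 * mu - U)\<^sup>2 < U\<^sup>2 - 2 * L / 3 * C" using D by simp
  then have "L * (L/9 * mu\<^sup>2 - 2/3 * mu * U + 2/3 * C) < 0"
    by (simp add: algebra_simps power2_eq_square)
  then have "L/9 * mu\<^sup>2 - 2/3 * mu * U + 2/3 * C < 0" using Lp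
    by (simp add: mult_less_0_iff)
  then have "ln (2 / a) < - L/6 * mu\<^sup>2 + mu * U - C + ln (2 / a)" by (simp add: algebra_simps)
  also have "\<dots> = (\<Sum>i=1..t. s * lm i * (x i - mu) - (lm i)\<^sup>2 * ((x i - mu)\<^sup>2 + 2 * sg\<^sup>2) / 6)"
    unfolding sum_expand U C_def L_def by (simp add: field_simps)
  finally show ?thesis .
qed



lemma meas_sets_mono: "space A = space B \<Longrightarrow> sets A \<subseteq> sets B \<Longrightarrow> f \<in> borel_measurable A \<Longrightarrow> f \<in> borel_measurable B"
  by (auto simp: measurable_def)

locale SNsetting =
  fixes M :: "'a measure" and F :: "nat \<Rightarrow> 'a measure"
    and X lam :: "nat \<Rightarrow> 'a \<Rightarrow> real" and \<mu> \<sigma> \<alpha> :: real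
  assumes ps: "prob_space M"
    and subalg: "\<And>t. subalgebra M (F t)"
    and filt: "\<And>s t. s \<le> t \<Longrightarrow> sets (F s) \<subseteq> sets (F t)"
    and adapted: "\<And>t. t \<ge> 1 \<Longrightarrow> X t \<in> borel_measurable (F t)"
    and integ: "\<And>t. t \<ge> 1 \<Longrightarrow> integrable M (X t)"
    and mean: "\<And>t. t \<ge> 1 \<Longrightarrow> AE \<omega> in M. real_cond_exp M (F (t - 1)) (X t) \<omega> = \<mu>"
    and var: "\<And>t. t \<ge> 1 \<Longrightarrow>
       AE \<omega> in M. nn_cond_exp M (F (t - 1)) (\<lambda>\<omega>. ennreal ((X t \<omega> - \<mu>)\<^sup>2)) \<omega> \<le> ennreal (\<sigma>\<^sup>2)"
    and alpha: "0 < \<alpha>" "\<alpha> < 1"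
    and predictable: "\<And>t. t \<ge> 1 \<Longrightarrow> lam t \<in> borel_measurable (F (t - 1))"
begin

interpretation prob_space M by (rule ps)

lemma sfs: "sigma_finite_subalgebra M (F n)"
proof -
  have "finite_measure_subalgebra M (F n)"
    by (unfold_locales) (rule subalg)
  then show ?thesis by (rule finite_measure_subalgebra_is_sigma_finite)
qed

lemma spaceF: "space (F n) = space M" using subalg[of n] unfolding subalgebra_def by auto

lemma measF: "f \<in> borel_measurable (F m) \<Longrightarrow> m \<le> n \<Longrightarrow> f \<in> borel_measurable (F n)"
  by (rule meas_sets_mono[of "F m"]) (auto simp: spaceF filt)

lemma toM: "f \<in> borel_measurable (F n) \<Longrightarrow> f \<in> borel_measurable M"
  by (rule measurable_from_subalg[OF subalg])

lemma lam_F: "1 \<le> i \<Longrightarrow> i \<le> Suc n \<Longrightarrow> lam i \<in> borel_measurable (F n)"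
  by (rule measF[OF predictable]) auto

lemma X_F: "1 \<le> i \<Longrightarrow> i \<le> n \<Longrightarrow> X i \<in> borel_measurable (F n)"
  by (rule measF[OF adapted]) auto

definition Sterm :: "real \<Rightarrow> nat \<Rightarrow> 'a \<Rightarrow> real" where
  "Sterm s i \<omega> = s * lam i \<omega> * (X i \<omega> - \<mu>) - (lam i \<omega>)\<^sup>2 * ((X i \<omega> - \<mu>)\<^sup>2 + 2 * \<sigma>\<^sup>2) / 6"

definition S :: "real \<Rightarrow> nat \<Rightarrow> 'a \<Rightarrow> real" where
  "S s n \<omega> = (\<Sum>i=1..n. Sterm s i \<omega>)"

definition G :: "real \<Rightarrow> nat \<Rightarrow> 'a set" where
  "G s n = {\<omega> \<in> space M. \<exists>t\<le>n. ln (2 / \<alpha>) < S s t \<omega>}"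

lemma Sterm_F: "1 \<le> i \<Longrightarrow> i \<le> n \<Longrightarrow> Sterm s i \<in> borel_measurable (F n)"
proof -
  assume "1 \<le> i" "i \<le> n"
  then have [measurable]: "lam i \<in> borel_measurable (F n)" "X i \<in> borel_measurable (F n)"
    using lam_F X_F by auto
  show ?thesis unfolding Sterm_def[abs_def] by measurable
qed

lemma S_F: "S s n \<in> borel_measurable (F n)"
  unfolding S_def[abs_def] by (rule borel_measurable_sum) (auto intro: Sterm_F)

lemma G_F: "G s n \<in> sets (F n)"
proof -
  have "G s n = (\<Union>t\<in>{..n}. {\<omega> \<in> space (F n). ln (2 / \<alpha>) < S s t \<omega>})"
    unfolding G_def spaceF by auto
  also have "\<dots> \<in> sets (F n)"
  proof (intro sets.finite_UN)
    fix t assume "t \<in> {..n}"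
    then have [measurable]: "S s t \<in> borel_measurable (F n)" using measF[OF S_F] by auto
    show "{\<omega> \<in> space (F n). ln (2 / \<alpha>) < S s t \<omega>} \<in> sets (F n)" by measurable
  qed auto
  finally show ?thesis .
qed

end



context SNsetting begin
interpretation prob_space M by (rule ps)

lemma KL:
  assumes s: "s = 1 \<or> s = -1" and hF[measurable]: "h \<in> borel_measurable (F n)" and hnn: "\<And>\<omega>. 0 \<le> h \<omega>"
  shows "(\<integral>\<^sup>+\<omega>. ennreal (h \<omega> * exp (Sterm s (Suc n) \<omega>)) \<partial>M) \<le> (\<integral>\<^sup>+\<omega>. ennreal (h \<omega>) \<partial>M)"
proof -
  interpret sf: sigma_finite_subalgebra M "F n" by (rule sfs)
  define l where "l = lam (Suc n)"
  define Y where "Y = (\<lambda>\<omega>. X (Suc n) \<omega> - \<mu>)"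
  define g where "g = (\<lambda>\<omega>. h \<omega> * exp (- (l \<omega>)\<^sup>2 * \<sigma>\<^sup>2 / 3))"
  define W where "W = (\<lambda>\<omega>. 1 + s * l \<omega> * Y \<omega> + (l \<omega>)\<^sup>2 * (Y \<omega>)\<^sup>2 / 3)"
  have lF[measurable]: "l \<in> borel_measurable (F n)" using lam_F l_def by auto
  have gF[measurable]: "g \<in> borel_measurable (F n)" unfolding g_def by measurable
  have XM[measurable]: "X (Suc n) \<in> borel_measurable M" using adapted[of "Suc n"] toM by auto
  have YM[measurable]: "Y \<in> borel_measurable M" unfolding Y_def by measurable
  have lM[measurable]: "l \<in> borel_measurable M" using toM lF by blast
  have hM[measurable]: "h \<in> borel_measurable M" using toM hF by blast
  have gM[measurable]: "g \<in> borel_measurable M" using toM gF by blast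
  have sq: "(s * l \<omega> * Y \<omega>)\<^sup>2 = (l \<omega>)\<^sup>2 * (Y \<omega>)\<^sup>2" for \<omega>
    using s by (auto simp: power2_eq_square)
  have Wnn: "0 \<le> W \<omega>" for \<omega>
  proof -
    define x where "x = s * l \<omega> * Y \<omega>"
    have e: "(x + 3/2)\<^sup>2 = x\<^sup>2 + 3*x + 9/4" by (simp add: power2_eq_square algebra_simps)
    have "0 \<le> (x + 3/2)\<^sup>2" by simp
    then have "0 \<le> 1 + (s * l \<omega> * Y \<omega>) + (s * l \<omega> * Y \<omega>)\<^sup>2 / 3"
      unfolding x_def[symmetric] e by linarith
    then show ?thesis unfolding W_def sq .
  qed
  have gnn: "0 \<le> g \<omega>" for \<omega> unfolding g_def using hnn by simp
  have step1: "h \<omega> * exp (Sterm s (Suc n) \<omega>) \<le> g \<omega> * W \<omega>" for \<omega>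
  proof -
    define x where "x = s * l \<omega> * Y \<omega>"
    have A: "Sterm s (Suc n) \<omega> = s * l \<omega> * Y \<omega> - (l \<omega>)\<^sup>2 * (Y \<omega>)\<^sup>2 / 6 - (l \<omega>)\<^sup>2 * \<sigma>\<^sup>2 / 3"
      unfolding Sterm_def l_def Y_def by (simp add: field_simps)
    have "Sterm s (Suc n) \<omega> = (x - x\<^sup>2/6) + (- (l \<omega>)\<^sup>2 * \<sigma>\<^sup>2 / 3)"
      unfolding A x_def sq by simp
    then have "exp (Sterm s (Suc n) \<omega>) = exp (x - x\<^sup>2/6) * exp (- (l \<omega>)\<^sup>2 * \<sigma>\<^sup>2 / 3)"
      by (simp only: exp_add)
    also have "\<dots> \<le> (1 + x + x\<^sup>2/3) * exp (- (l \<omega>)\<^sup>2 * \<sigma>\<^sup>2 / 3)"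
      by (rule mult_right_mono[OF key_ineq]) simp
    also have "\<dots> = W \<omega> * exp (- (l \<omega>)\<^sup>2 * \<sigma>\<^sup>2 / 3)"
      unfolding W_def x_def sq by simp
    finally have "h \<omega> * exp (Sterm s (Suc n) \<omega>) \<le> h \<omega> * (W \<omega> * exp (- (l \<omega>)\<^sup>2 * \<sigma>\<^sup>2 / 3))"
      by (rule mult_left_mono) (rule hnn)
    then show ?thesis unfolding g_def by (simp add: ac_simps)
  qed
  define B where "B k = {\<omega> \<in> space M. \<bar>l \<omega>\<bar> \<le> real k \<and> g \<omega> \<le> real k}" for k :: nat
  have BF: "B k \<in> sets (F n)" for k
  proof -
    have "B k = {\<omega> \<in> space (F n). \<bar>l \<omega>\<bar> \<le> real k \<and> g \<omega> \<le> real k}" unfolding B_def spaceF ..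
    also have "\<dots> \<in> sets (F n)" by measurable
    finally show ?thesis .
  qed
  have per_k: "(\<integral>\<^sup>+\<omega>. ennreal (indicator (B k) \<omega> * g \<omega> * W \<omega>) \<partial>M) \<le> (\<integral>\<^sup>+\<omega>. ennreal (h \<omega>) \<partial>M)" for k
  proof -
    define b where "b = (\<lambda>\<omega>. indicator (B k) \<omega> * g \<omega>)"
    have [measurable]: "B k \<in> sets (F n)" by (rule BF)
    have bF[measurable]: "b \<in> borel_measurable (F n)" unfolding b_def by measurable
    have bM[measurable]: "b \<in> borel_measurable M" using toM bF by blast
    have bnn: "0 \<le> b \<omega>" for \<omega> unfolding b_def using gnn by (simp add: indicator_def)
    have bnd: "b \<omega> \<le> real k \<and> \<bar>b \<omega> * l \<omega>\<bar> \<le> real k * real k \<and> b \<omega> * (l \<omega>)\<^sup>2 \<le> real k * (real k * real k)" for \<omega>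
    proof (cases "\<omega> \<in> B k")
      case True
      then have l: "\<bar>l \<omega>\<bar> \<le> real k" and gk: "g \<omega> \<le> real k" unfolding B_def by auto
      have b: "b \<omega> = g \<omega>" using True unfolding b_def by simp
      have l2: "(l \<omega>)\<^sup>2 \<le> real k * real k"
      proof -
        have "\<bar>l \<omega>\<bar> * \<bar>l \<omega>\<bar> \<le> real k * real k" by (rule mult_mono[OF l l]) auto
        then show ?thesis by (simp add: power2_eq_square)
      qed
      have "\<bar>g \<omega> * l \<omega>\<bar> = g \<omega> * \<bar>l \<omega>\<bar>" using gnn[of \<omega>] by (simp add: abs_mult)
      also have "\<dots> \<le> real k * real k" by (rule mult_mono[OF gk l]) auto
      finally have "\<bar>g \<omega> * l \<omega>\<bar> \<le> real k * real k" .
      moreover have "g \<omega> * (l \<omega>)\<^sup>2 \<le> real k * (real k * real k)"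
        by (rule mult_mono[OF gk l2]) auto
      ultimately show ?thesis using b gk by simp
    next
      case False
      then show ?thesis unfolding b_def by simp
    qed
    have int_b: "integrable M b"
      by (rule integrable_const_bound[where B="real k"]) (use bnd bnn in auto)
    have int_bl: "integrable M (\<lambda>\<omega>. b \<omega> * l \<omega>)"
      by (rule integrable_const_bound[where B="real k * real k"]) (use bnd in auto)
    have int_bl2: "integrable M (\<lambda>\<omega>. b \<omega> * (l \<omega>)\<^sup>2 * \<sigma>\<^sup>2)"
      by (rule integrable_const_bound[where B="real k * (real k * real k) * \<sigma>\<^sup>2"])
         (use bnd bnn in \<open>auto intro!: mult_right_mono\<close>)
    have int_X: "integrable M (X (Suc n))" using integ by auto
    have int_blX: "integrable M (\<lambda>\<omega>. (b \<omega> * l \<omega>) * X (Suc n) \<omega>)"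
    proof -
      have i1: "integrable M (\<lambda>\<omega>. (real k * real k) * X (Suc n) \<omega>)" using int_X by simp
      show ?thesis
      proof (rule Bochner_Integration.integrable_bound[OF i1])
      show "AE \<omega> in M. norm (b \<omega> * l \<omega> * X (Suc n) \<omega>) \<le> norm (real k * real k * X (Suc n) \<omega>)"
        using bnd by (auto simp: abs_mult intro!: mult_right_mono)
    qed measurable
    qed
    have ce: "(\<integral>\<omega>. (b \<omega> * l \<omega>) * real_cond_exp M (F n) (X (Suc n)) \<omega> \<partial>M) = (\<integral>\<omega>. (b \<omega> * l \<omega>) * X (Suc n) \<omega> \<partial>M)"
      by (rule sf.real_cond_exp_intg(2)[OF int_blX]) measurable
    have "(\<integral>\<omega>. (b \<omega> * l \<omega>) * real_cond_exp M (F n) (X (Suc n)) \<omega> \<partial>M) = (\<integral>\<omega>. (b \<omega> * l \<omega>) * \<mu> \<partial>M)"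
      by (rule integral_cong_AE) (use mean[of "Suc n"] in auto)
    then have e1: "(\<integral>\<omega>. b \<omega> * l \<omega> * Y \<omega> \<partial>M) = 0"
      unfolding Y_def using ce int_blX int_bl
      by (simp add: right_diff_distrib)
    have int_blY: "integrable M (\<lambda>\<omega>. b \<omega> * l \<omega> * Y \<omega>)"
      unfolding Y_def using int_blX int_bl by (simp add: right_diff_distrib)
    have Y2: "(\<integral>\<^sup>+\<omega>. ennreal (b \<omega> * (l \<omega>)\<^sup>2 * (Y \<omega>)\<^sup>2) \<partial>M) \<le> (\<integral>\<^sup>+\<omega>. ennreal (b \<omega> * (l \<omega>)\<^sup>2 * \<sigma>\<^sup>2) \<partial>M)"
    proof -
      have "(\<integral>\<^sup>+\<omega>. ennreal (b \<omega> * (l \<omega>)\<^sup>2 * (Y \<omega>)\<^sup>2) \<partial>M)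
          = (\<integral>\<^sup>+\<omega>. ennreal (b \<omega> * (l \<omega>)\<^sup>2) * ennreal ((X (Suc n) \<omega> - \<mu>)\<^sup>2) \<partial>M)"
        unfolding Y_def using bnn by (intro nn_integral_cong) (simp add: ennreal_mult)
      also have "\<dots> = (\<integral>\<^sup>+\<omega>. ennreal (b \<omega> * (l \<omega>)\<^sup>2) * nn_cond_exp M (F n) (\<lambda>\<omega>. ennreal ((X (Suc n) \<omega> - \<mu>)\<^sup>2)) \<omega> \<partial>M)"
        by (rule sf.nn_cond_exp_intg[symmetric]) measurable
      also have "\<dots> \<le> (\<integral>\<^sup>+\<omega>. ennreal (b \<omega> * (l \<omega>)\<^sup>2) * ennreal (\<sigma>\<^sup>2) \<partial>M)"
      proof (rule nn_integral_mono_AE)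
        have v: "AE \<omega> in M. nn_cond_exp M (F n) (\<lambda>\<omega>. ennreal ((X (Suc n) \<omega> - \<mu>)\<^sup>2)) \<omega> \<le> ennreal (\<sigma>\<^sup>2)"
          using var[of "Suc n"] by simp
        show "AE \<omega> in M. ennreal (b \<omega> * (l \<omega>)\<^sup>2) * nn_cond_exp M (F n) (\<lambda>\<omega>. ennreal ((X (Suc n) \<omega> - \<mu>)\<^sup>2)) \<omega>
             \<le> ennreal (b \<omega> * (l \<omega>)\<^sup>2) * ennreal (\<sigma>\<^sup>2)"
          using v by eventually_elim (rule mult_left_mono, auto)
      qed
      also have "\<dots> = (\<integral>\<^sup>+\<omega>. ennreal (b \<omega> * (l \<omega>)\<^sup>2 * \<sigma>\<^sup>2) \<partial>M)"
        using bnn by (intro nn_integral_cong) (simp add: ennreal_mult)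
      finally show ?thesis .
    qed
    have nn2: "(\<integral>\<^sup>+\<omega>. ennreal (b \<omega> * (l \<omega>)\<^sup>2 * \<sigma>\<^sup>2) \<partial>M) = ennreal (\<integral>\<omega>. b \<omega> * (l \<omega>)\<^sup>2 * \<sigma>\<^sup>2 \<partial>M)"
      by (rule nn_integral_eq_integral[OF int_bl2]) (use bnn in auto)
    have int_blY2: "integrable M (\<lambda>\<omega>. b \<omega> * (l \<omega>)\<^sup>2 * (Y \<omega>)\<^sup>2)"
    proof (rule integrableI_bounded)
      have "(\<integral>\<^sup>+\<omega>. ennreal (norm (b \<omega> * (l \<omega>)\<^sup>2 * (Y \<omega>)\<^sup>2)) \<partial>M) = (\<integral>\<^sup>+\<omega>. ennreal (b \<omega> * (l \<omega>)\<^sup>2 * (Y \<omega>)\<^sup>2) \<partial>M)"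
        using bnn by (intro nn_integral_cong) simp
      also have "\<dots> < \<infinity>" using Y2 nn2 by (simp add: le_less_trans)
      finally show "(\<integral>\<^sup>+\<omega>. ennreal (norm (b \<omega> * (l \<omega>)\<^sup>2 * (Y \<omega>)\<^sup>2)) \<partial>M) < \<infinity>" .
    qed measurable
    have r: "(\<integral>\<omega>. b \<omega> * (l \<omega>)\<^sup>2 * (Y \<omega>)\<^sup>2 \<partial>M) \<le> (\<integral>\<omega>. b \<omega> * (l \<omega>)\<^sup>2 * \<sigma>\<^sup>2 \<partial>M)"
    proof -
      have "(\<integral>\<^sup>+\<omega>. ennreal (b \<omega> * (l \<omega>)\<^sup>2 * (Y \<omega>)\<^sup>2) \<partial>M) = ennreal (\<integral>\<omega>. b \<omega> * (l \<omega>)\<^sup>2 * (Y \<omega>)\<^sup>2 \<partial>M)"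
        by (rule nn_integral_eq_integral[OF int_blY2]) (use bnn in auto)
      with Y2 nn2 have "ennreal (\<integral>\<omega>. b \<omega> * (l \<omega>)\<^sup>2 * (Y \<omega>)\<^sup>2 \<partial>M) \<le> ennreal (\<integral>\<omega>. b \<omega> * (l \<omega>)\<^sup>2 * \<sigma>\<^sup>2 \<partial>M)"
        by simp
      moreover have "0 \<le> (\<integral>\<omega>. b \<omega> * (l \<omega>)\<^sup>2 * \<sigma>\<^sup>2 \<partial>M)"
        by (rule integral_nonneg_AE) (use bnn in auto)
      ultimately show ?thesis by simp
    qed
    have "(\<integral>\<^sup>+\<omega>. ennreal (indicator (B k) \<omega> * g \<omega> * W \<omega>) \<partial>M)
        = (\<integral>\<^sup>+\<omega>. ennreal (b \<omega> + s * (b \<omega> * l \<omega> * Y \<omega>) + (b \<omega> * (l \<omega>)\<^sup>2 * (Y \<omega>)\<^sup>2) / 3) \<partial>M)"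
      unfolding b_def W_def by (intro nn_integral_cong) (simp add: algebra_simps)
    also have "\<dots> = ennreal (\<integral>\<omega>. b \<omega> + s * (b \<omega> * l \<omega> * Y \<omega>) + (b \<omega> * (l \<omega>)\<^sup>2 * (Y \<omega>)\<^sup>2) / 3 \<partial>M)"
    proof (rule nn_integral_eq_integral)
      show "integrable M (\<lambda>\<omega>. b \<omega> + s * (b \<omega> * l \<omega> * Y \<omega>) + (b \<omega> * (l \<omega>)\<^sup>2 * (Y \<omega>)\<^sup>2) / 3)"
        using int_b int_blY int_blY2 by auto
      have "0 \<le> b \<omega> + s * (b \<omega> * l \<omega> * Y \<omega>) + (b \<omega> * (l \<omega>)\<^sup>2 * (Y \<omega>)\<^sup>2) / 3" for \<omega>
      proof -
        have "b \<omega> + s * (b \<omega> * l \<omega> * Y \<omega>) + (b \<omega> * (l \<omega>)\<^sup>2 * (Y \<omega>)\<^sup>2) / 3 = b \<omega> * W \<omega>"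
          unfolding W_def by (simp add: algebra_simps)
        then show ?thesis using bnn Wnn by simp
      qed
      then show "AE \<omega> in M. 0 \<le> b \<omega> + s * (b \<omega> * l \<omega> * Y \<omega>) + (b \<omega> * (l \<omega>)\<^sup>2 * (Y \<omega>)\<^sup>2) / 3" by simp
    qed
    also have "(\<integral>\<omega>. b \<omega> + s * (b \<omega> * l \<omega> * Y \<omega>) + (b \<omega> * (l \<omega>)\<^sup>2 * (Y \<omega>)\<^sup>2) / 3 \<partial>M)
        = (\<integral>\<omega>. b \<omega> \<partial>M) + s * (\<integral>\<omega>. b \<omega> * l \<omega> * Y \<omega> \<partial>M) + (\<integral>\<omega>. b \<omega> * (l \<omega>)\<^sup>2 * (Y \<omega>)\<^sup>2 \<partial>M) / 3"
      using int_b int_blY int_blY2 by simp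
    also have "\<dots> \<le> (\<integral>\<omega>. b \<omega> \<partial>M) + (\<integral>\<omega>. b \<omega> * (l \<omega>)\<^sup>2 * \<sigma>\<^sup>2 \<partial>M) / 3"
      using e1 r by simp
    also have "\<dots> = (\<integral>\<omega>. b \<omega> + b \<omega> * (l \<omega>)\<^sup>2 * \<sigma>\<^sup>2 / 3 \<partial>M)"
      using int_b int_bl2 by simp
    finally have "(\<integral>\<^sup>+\<omega>. ennreal (indicator (B k) \<omega> * g \<omega> * W \<omega>) \<partial>M) \<le> ennreal (\<integral>\<omega>. b \<omega> + b \<omega> * (l \<omega>)\<^sup>2 * \<sigma>\<^sup>2 / 3 \<partial>M)"
      by (simp add: ennreal_leI)
    also have "\<dots> = (\<integral>\<^sup>+\<omega>. ennreal (b \<omega> + b \<omega> * (l \<omega>)\<^sup>2 * \<sigma>\<^sup>2 / 3) \<partial>M)"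
      by (rule nn_integral_eq_integral[symmetric]) (use int_b int_bl2 bnn in auto)
    also have "\<dots> \<le> (\<integral>\<^sup>+\<omega>. ennreal (h \<omega>) \<partial>M)"
    proof (intro nn_integral_mono ennreal_leI)
      fix \<omega>
      define a where "a = (l \<omega>)\<^sup>2 * \<sigma>\<^sup>2 / 3"
      have "1 + a \<le> exp a" by (rule exp_ge_add_one_self)
      then have "exp (- a) * (1 + a) \<le> exp (- a) * exp a" by (intro mult_left_mono) auto
      then have ea: "exp (- a) * (1 + a) \<le> 1" by (simp flip: exp_add)
      have "b \<omega> + b \<omega> * (l \<omega>)\<^sup>2 * \<sigma>\<^sup>2 / 3 = indicator (B k) \<omega> * (h \<omega> * (exp (- a) * (1 + a)))"
        unfolding b_def g_def a_def by (simp add: algebra_simps)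
      also have "\<dots> \<le> h \<omega>"
        using ea hnn[of \<omega>] by (auto simp: indicator_def intro: mult_left_le)
      finally show "b \<omega> + b \<omega> * (l \<omega>)\<^sup>2 * \<sigma>\<^sup>2 / 3 \<le> h \<omega>" .
    qed
    finally show ?thesis .
  qed
  have "(\<integral>\<^sup>+\<omega>. ennreal (h \<omega> * exp (Sterm s (Suc n) \<omega>)) \<partial>M) \<le> (\<integral>\<^sup>+\<omega>. ennreal (g \<omega> * W \<omega>) \<partial>M)"
    by (intro nn_integral_mono ennreal_leI step1)
  also have "\<dots> = (\<integral>\<^sup>+\<omega>. (SUP k. ennreal (indicator (B k) \<omega> * g \<omega> * W \<omega>)) \<partial>M)"
  proof (rule nn_integral_cong)
    fix \<omega> assume om: "\<omega> \<in> space M"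
    obtain k :: nat where k: "max \<bar>l \<omega>\<bar> (g \<omega>) \<le> real k" using real_arch_simple by blast
    have "\<omega> \<in> B k" using k om unfolding B_def by auto
    then have "ennreal (g \<omega> * W \<omega>) \<le> (SUP k. ennreal (indicator (B k) \<omega> * g \<omega> * W \<omega>))"
      by (intro SUP_upper2[of k]) auto
    moreover have "(SUP k. ennreal (indicator (B k) \<omega> * g \<omega> * W \<omega>)) \<le> ennreal (g \<omega> * W \<omega>)"
      by (intro SUP_least ennreal_leI) (auto simp: indicator_def gnn Wnn)
    ultimately show "ennreal (g \<omega> * W \<omega>) = (SUP k. ennreal (indicator (B k) \<omega> * g \<omega> * W \<omega>))"
      by (rule antisym)
  qed
  also have "\<dots> = (SUP k. (\<integral>\<^sup>+\<omega>. ennreal (indicator (B k) \<omega> * g \<omega> * W \<omega>) \<partial>M))"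
  proof (rule nn_integral_monotone_convergence_SUP)
    show "incseq (\<lambda>k \<omega>. ennreal (indicator (B k) \<omega> * g \<omega> * W \<omega>))"
    proof (intro incseq_SucI le_funI ennreal_leI)
      fix k \<omega>
      have "B k \<subseteq> B (Suc k)" unfolding B_def by auto
      then show "indicator (B k) \<omega> * g \<omega> * W \<omega> \<le> indicator (B (Suc k)) \<omega> * g \<omega> * W \<omega>"
        using gnn[of \<omega>] Wnn[of \<omega>] by (auto simp: indicator_def)
    qed
    fix k
    have [measurable]: "B k \<in> sets M" using BF subalg[of n] unfolding subalgebra_def by auto
    show "(\<lambda>\<omega>. ennreal (indicator (B k) \<omega> * g \<omega> * W \<omega>)) \<in> borel_measurable M"
      unfolding W_def by measurable
  qed
  also have "\<dots> \<le> (\<integral>\<^sup>+\<omega>. ennreal (h \<omega>) \<partial>M)"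
    by (rule SUP_least) (rule per_k)
  finally show ?thesis .
qed
end



context SNsetting begin
interpretation prob_space M by (rule ps)

lemma S_Suc: "S s (Suc N) \<omega> = S s N \<omega> + Sterm s (Suc N) \<omega>"
  by (simp add: S_def sum.cl_ivl_Suc)

lemma lnpos: "0 < ln (2 / \<alpha>)" using alpha by simp

lemma G0: "G s 0 = {}" using lnpos by (auto simp: G_def S_def)

lemma G_mono: "G s N \<subseteq> G s (Suc N)"
proof
  fix \<omega> assume "\<omega> \<in> G s N"
  then obtain t where "\<omega> \<in> space M" "t \<le> N" "ln (2 / \<alpha>) < S s t \<omega>" unfolding G_def by auto
  then show "\<omega> \<in> G s (Suc N)" unfolding G_def by (intro CollectI conjI exI[of _ t]) auto
qed

lemma GM: "G s N \<in> sets M" using G_F subalg[of N] unfolding subalgebra_def by auto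

lemma Ville:
  assumes s: "s = 1 \<or> s = -1"
  shows "(\<integral>\<^sup>+\<omega>. ennreal (if \<omega> \<in> G s N then 2 / \<alpha> else exp (S s N \<omega>)) \<partial>M) \<le> 1"
proof (induction N)
  case 0
  have "S s 0 \<omega> = 0" for \<omega> by (simp add: S_def)
  then show ?case by (simp add: G0 emeasure_space_1)
next
  case (Suc N)
  define c where "c = 2 / \<alpha>"
  define h where "h = (\<lambda>\<omega>. indicator (space M - G s N) \<omega> * exp (S s N \<omega>))"
  have [measurable]: "G s N \<in> sets M" by (rule GM)
  have [measurable]: "S s N \<in> borel_measurable (F N)" by (rule S_F)
  have [measurable]: "space M - G s N \<in> sets (F N)"
    using G_F[of s N] sets.top[of "F N"] unfolding spaceF by auto
  have hF[measurable]: "h \<in> borel_measurable (F N)" unfolding h_def by measurable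
  have hM: "h \<in> borel_measurable M" using toM hF by blast
  have SN: "S s N \<in> borel_measurable M" using toM S_F by blast
  have StM: "Sterm s (Suc N) \<in> borel_measurable M" using toM Sterm_F[of "Suc N" "Suc N" s] by auto
  have hnn: "0 \<le> h \<omega>" for \<omega> unfolding h_def by simp
  have "(\<integral>\<^sup>+\<omega>. ennreal (if \<omega> \<in> G s (Suc N) then 2 / \<alpha> else exp (S s (Suc N) \<omega>)) \<partial>M)
      \<le> (\<integral>\<^sup>+\<omega>. ennreal (if \<omega> \<in> G s N then c else 0) + ennreal (h \<omega> * exp (Sterm s (Suc N) \<omega>)) \<partial>M)"
  proof (rule nn_integral_mono)
    fix \<omega> assume om: "\<omega> \<in> space M"
    show "ennreal (if \<omega> \<in> G s (Suc N) then 2 / \<alpha> else exp (S s (Suc N) \<omega>))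
        \<le> ennreal (if \<omega> \<in> G s N then c else 0) + ennreal (h \<omega> * exp (Sterm s (Suc N) \<omega>))"
    proof (cases "\<omega> \<in> G s N")
      case True
      then have "\<omega> \<in> G s (Suc N)" using G_mono by auto
      with True show ?thesis by (simp add: c_def h_def)
    next
      case False
      have hS: "h \<omega> * exp (Sterm s (Suc N) \<omega>) = exp (S s (Suc N) \<omega>)"
        using False om by (simp add: h_def S_Suc exp_add)
      show ?thesis
      proof (cases "\<omega> \<in> G s (Suc N)")
        case True
        then obtain t where t: "t \<le> Suc N" "ln (2 / \<alpha>) < S s t \<omega>" unfolding G_def by auto
        have "t = Suc N" using t False om unfolding G_def by (cases "t \<le> N") auto
        then have "ln (2 / \<alpha>) < S s (Suc N) \<omega>" using t by simp
        then have "exp (ln (2 / \<alpha>)) < exp (S s (Suc N) \<omega>)" by simp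
        then have "2 / \<alpha> < exp (S s (Suc N) \<omega>)" using alpha by simp
        then show ?thesis using True False hS by (simp add: ennreal_leI)
      next
        case False2: False
        show ?thesis using False False2 hS by simp
      qed
    qed
  qed
  also have "\<dots> = (\<integral>\<^sup>+\<omega>. ennreal (if \<omega> \<in> G s N then c else 0) \<partial>M) + (\<integral>\<^sup>+\<omega>. ennreal (h \<omega> * exp (Sterm s (Suc N) \<omega>)) \<partial>M)"
    by (rule nn_integral_add) (use hM StM in measurable)
  also have "\<dots> \<le> (\<integral>\<^sup>+\<omega>. ennreal (if \<omega> \<in> G s N then c else 0) \<partial>M) + (\<integral>\<^sup>+\<omega>. ennreal (h \<omega>) \<partial>M)"
    by (rule add_left_mono) (rule KL[OF s hF hnn])
  also have "\<dots> = (\<integral>\<^sup>+\<omega>. ennreal (if \<omega> \<in> G s N then c else 0) + ennreal (h \<omega>) \<partial>M)"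
    by (rule nn_integral_add[symmetric]) (use hM in measurable)
  also have "\<dots> = (\<integral>\<^sup>+\<omega>. ennreal (if \<omega> \<in> G s N then 2 / \<alpha> else exp (S s N \<omega>)) \<partial>M)"
    by (rule nn_integral_cong) (simp add: h_def c_def)
  also have "\<dots> \<le> 1" by (rule Suc.IH)
  finally show ?case .
qed

lemma G_bound:
  assumes s: "s = 1 \<or> s = -1"
  shows "measure M (G s N) \<le> \<alpha> / 2"
proof -
  have "ennreal (2 / \<alpha>) * emeasure M (G s N) = (\<integral>\<^sup>+\<omega>. ennreal (2 / \<alpha>) * indicator (G s N) \<omega> \<partial>M)"
    by (rule nn_integral_cmult_indicator[symmetric]) (rule GM)
  also have "\<dots> \<le> (\<integral>\<^sup>+\<omega>. ennreal (if \<omega> \<in> G s N then 2 / \<alpha> else exp (S s N \<omega>)) \<partial>M)"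
    by (intro nn_integral_mono) (simp add: indicator_def)
  also have "\<dots> \<le> 1" by (rule Ville[OF s])
  finally have "ennreal (2 / \<alpha>) * emeasure M (G s N) \<le> 1" .
  then have "ennreal (2 / \<alpha>) * ennreal (measure M (G s N)) \<le> 1"
    by (simp only: emeasure_eq_measure)
  moreover have "ennreal (2 / \<alpha> * measure M (G s N)) = ennreal (2 / \<alpha>) * ennreal (measure M (G s N))"
    by (rule ennreal_mult) (use alpha in auto)
  ultimately have "ennreal (2 / \<alpha> * measure M (G s N)) \<le> 1" by (simp only:)
  then have m1: "2 / \<alpha> * measure M (G s N) \<le> 1"
    by (simp only: ennreal_le_1)
  have "measure M (G s N) = (\<alpha> / 2) * (2 / \<alpha> * measure M (G s N))" using alpha by simp
  also have "\<dots> \<le> (\<alpha> / 2) * 1" by (rule mult_left_mono[OF m1]) (use alpha in simp)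
  finally show ?thesis by simp
qed

lemma B_bound:
  assumes s: "s = 1 \<or> s = -1"
  shows "measure M (\<Union>N. G s N) \<le> \<alpha> / 2"
proof -
  have "(\<lambda>N. measure M (G s N)) \<longlonglongrightarrow> measure M (\<Union>N. G s N)"
  proof (rule finite_Lim_measure_incseq)
    show "range (G s) \<subseteq> sets M" using GM by auto
    show "incseq (G s)" by (rule incseq_SucI) (rule G_mono)
  qed
  then show ?thesis
    by (rule LIMSEQ_le_const2) (use G_bound[OF s] in auto)
qed

end



lemma set_eq_aux: "{\<omega> \<in> A. \<forall>t\<ge>(1::nat). P t \<omega>} = A \<inter> (\<Inter>t. {\<omega> \<in> A. 1 \<le> t \<longrightarrow> P t \<omega>})"
  by blast

lemma aCI_iff: "mu \<in> aCI_SN a sg s lm x t \<longleftrightarrow>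
   (0 \<le> D_SN a sg s lm x t \<and>
    (U_SN s lm x t - sqrt (D_SN a sg s lm x t)) / ((\<Sum>i=1..t. (lm i)\<^sup>2) / 3) < mu \<and>
    mu < (U_SN s lm x t + sqrt (D_SN a sg s lm x t)) / ((\<Sum>i=1..t. (lm i)\<^sup>2) / 3))"
  unfolding aCI_SN_def by auto

context SNsetting begin
interpretation prob_space M by (rule ps)

lemma sumM:
  fixes f :: "real \<Rightarrow> real \<Rightarrow> real"
  assumes "\<And>i. lam i \<in> borel_measurable M \<Longrightarrow> X i \<in> borel_measurable M \<Longrightarrow> (\<lambda>\<omega>. f (lam i \<omega>) (X i \<omega>)) \<in> borel_measurable M"
  shows "(\<lambda>\<omega>. \<Sum>i=1..t. f (lam i \<omega>) (X i \<omega>)) \<in> borel_measurable M"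
proof (rule borel_measurable_sum)
  fix i assume i: "i \<in> {1..t}"
  have "lam i \<in> borel_measurable M" using lam_F[of i "i"] toM i by auto
  moreover have "X i \<in> borel_measurable M" using X_F[of i i] toM i by auto
  ultimately show "(\<lambda>\<omega>. f (lam i \<omega>) (X i \<omega>)) \<in> borel_measurable M" using assms i by blast
qed

lemma GoodM: "{\<omega> \<in> space M. \<forall>t\<ge>1. \<mu> \<in> CI_SN \<alpha> \<sigma> (\<lambda>i. lam i \<omega>) (\<lambda>i. X i \<omega>) t} \<in> sets M"
proof -
  have one: "{\<omega> \<in> space M. \<mu> \<in> CI_SN \<alpha> \<sigma> (\<lambda>i. lam i \<omega>) (\<lambda>i. X i \<omega>) t} \<in> sets M" for t
  proof -
    have [measurable]: "(\<lambda>\<omega>. \<Sum>i=1..t. lam i \<omega>) \<in> borel_measurable M"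
      using sumM[where t=t and f="\<lambda>a b. a"] by auto
    have [measurable]: "(\<lambda>\<omega>. \<Sum>i=1..t. lam i \<omega> * X i \<omega>) \<in> borel_measurable M"
      by (rule sumM[where t=t and f="\<lambda>a b. a * b"]) (auto intro!: borel_measurable_times borel_measurable_power)
    have [measurable]: "(\<lambda>\<omega>. \<Sum>i=1..t. (lam i \<omega>)\<^sup>2 * X i \<omega>) \<in> borel_measurable M"
      by (rule sumM[where t=t and f="\<lambda>a b. a\<^sup>2 * b"]) (auto intro!: borel_measurable_times borel_measurable_power)
    have [measurable]: "(\<lambda>\<omega>. \<Sum>i=1..t. (lam i \<omega>)\<^sup>2 * (X i \<omega>)\<^sup>2) \<in> borel_measurable M"
      by (rule sumM[where t=t and f="\<lambda>a b. a\<^sup>2 * b\<^sup>2"]) (auto intro!: borel_measurable_times borel_measurable_power)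
    have [measurable]: "(\<lambda>\<omega>. \<Sum>i=1..t. (lam i \<omega>)\<^sup>2) \<in> borel_measurable M"
      by (rule sumM[where t=t and f="\<lambda>a b. a\<^sup>2"]) (auto intro!: borel_measurable_times borel_measurable_power)
    have U[measurable]: "(\<lambda>\<omega>. U_SN s (\<lambda>i. lam i \<omega>) (\<lambda>i. X i \<omega>) t) \<in> borel_measurable M" for s
      unfolding U_SN_def by measurable
    have D[measurable]: "(\<lambda>\<omega>. D_SN \<alpha> \<sigma> s (\<lambda>i. lam i \<omega>) (\<lambda>i. X i \<omega>) t) \<in> borel_measurable M" for s
      unfolding D_SN_def by measurable
    define Df where "Df s \<omega> = D_SN \<alpha> \<sigma> s (\<lambda>i. lam i \<omega>) (\<lambda>i. X i \<omega>) t" for s \<omega>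
    define Uf where "Uf s \<omega> = U_SN s (\<lambda>i. lam i \<omega>) (\<lambda>i. X i \<omega>) t" for s \<omega>
    define Lf where "Lf \<omega> = (\<Sum>i=1..t. (lam i \<omega>)\<^sup>2)" for \<omega>
    have DfM[measurable]: "Df s \<in> borel_measurable M" for s unfolding Df_def[abs_def] by (rule D)
    have UfM[measurable]: "Uf s \<in> borel_measurable M" for s unfolding Uf_def[abs_def] by (rule U)
    have LfM[measurable]: "Lf \<in> borel_measurable M" unfolding Lf_def[abs_def] by fact
    have "{\<omega> \<in> space M. \<mu> \<in> CI_SN \<alpha> \<sigma> (\<lambda>i. lam i \<omega>) (\<lambda>i. X i \<omega>) t}
      = {\<omega> \<in> space M. \<not> (0 \<le> Df 1 \<omega> \<and> (Uf 1 \<omega> - sqrt (Df 1 \<omega>)) / (Lf \<omega> / 3) < \<mu> \<and> \<mu> < (Uf 1 \<omega> + sqrt (Df 1 \<omega>)) / (Lf \<omega> / 3))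
          \<and> \<not> (0 \<le> Df (-1) \<omega> \<and> (Uf (-1) \<omega> - sqrt (Df (-1) \<omega>)) / (Lf \<omega> / 3) < \<mu> \<and> \<mu> < (Uf (-1) \<omega> + sqrt (Df (-1) \<omega>)) / (Lf \<omega> / 3))}"
      unfolding CI_SN_def Diff_iff Un_iff aCI_iff Df_def Uf_def Lf_def by simp
    also have "\<dots> \<in> sets M" by measurable
    finally show ?thesis .
  qed
  have "{\<omega> \<in> space M. \<forall>t\<ge>1. \<mu> \<in> CI_SN \<alpha> \<sigma> (\<lambda>i. lam i \<omega>) (\<lambda>i. X i \<omega>) t}
      = space M \<inter> (\<Inter>t. {\<omega> \<in> space M. 1 \<le> t \<longrightarrow> \<mu> \<in> CI_SN \<alpha> \<sigma> (\<lambda>i. lam i \<omega>) (\<lambda>i. X i \<omega>) t})"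
    by (rule set_eq_aux)
  also have "\<dots> \<in> sets M"
  proof -
    have each: "{\<omega> \<in> space M. 1 \<le> t \<longrightarrow> \<mu> \<in> CI_SN \<alpha> \<sigma> (\<lambda>i. lam i \<omega>) (\<lambda>i. X i \<omega>) t} \<in> sets M" for t :: nat
    proof (cases "1 \<le> t")
      case True
      then show ?thesis using one[of t] by simp
    next
      case False
      then show ?thesis by simp
    qed
    have "(\<Inter>t. {\<omega> \<in> space M. 1 \<le> t \<longrightarrow> \<mu> \<in> CI_SN \<alpha> \<sigma> (\<lambda>i. lam i \<omega>) (\<lambda>i. X i \<omega>) t}) \<in> sets M"
    proof (rule sets.countable_INT)
      show "(\<lambda>t. {\<omega> \<in> space M. 1 \<le> t \<longrightarrow> \<mu> \<in> CI_SN \<alpha> \<sigma> (\<lambda>i. lam i \<omega>) (\<lambda>i. X i \<omega>) t}) ` UNIV \<subseteq> sets M"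
        by (rule image_subsetI) (rule each)
    qed simp
    then show ?thesis by (rule sets.Int[OF sets.top])
  qed
  finally show ?thesis .
qed

lemma main: "measure M {\<omega> \<in> space M. \<forall>t\<ge>1. \<mu> \<in> CI_SN \<alpha> \<sigma> (\<lambda>i. lam i \<omega>) (\<lambda>i. X i \<omega>) t} \<ge> 1 - \<alpha>"
proof -
  define Bp where "Bp = (\<Union>N. G 1 N)"
  define Bm where "Bm = (\<Union>N. G (-1) N)"
  have BpM: "Bp \<in> sets M" unfolding Bp_def by (rule sets.countable_nat_UN) (rule image_subsetI, rule GM)
  have BmM: "Bm \<in> sets M" unfolding Bm_def by (rule sets.countable_nat_UN) (rule image_subsetI, rule GM)
  have notin: "\<mu> \<notin> aCI_SN \<alpha> \<sigma> s (\<lambda>i. lam i \<omega>) (\<lambda>i. X i \<omega>) t"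
    if s: "s = 1 \<or> s = -1" and om: "\<omega> \<in> space M" and nb: "\<omega> \<notin> Bp" "\<omega> \<notin> Bm" for s \<omega> t
  proof
    assume "\<mu> \<in> aCI_SN \<alpha> \<sigma> s (\<lambda>i. lam i \<omega>) (\<lambda>i. X i \<omega>) t"
    from aCI_imp[OF this] have lt: "ln (2 / \<alpha>) < S s t \<omega>"
      unfolding S_def Sterm_def .
    have "\<omega> \<in> G s t" unfolding G_def
      by (intro CollectI conjI om exI[of _ t]) (simp_all add: lt)
    then have "\<omega> \<in> (\<Union>N. G s N)" by (rule UN_I[rotated]) simp
    then show False using nb s unfolding Bp_def Bm_def by (elim disjE) simp_all
  qed
  have sub: "space M - (Bp \<union> Bm) \<subseteq> {\<omega> \<in> space M. \<forall>t\<ge>1. \<mu> \<in> CI_SN \<alpha> \<sigma> (\<lambda>i. lam i \<omega>) (\<lambda>i. X i \<omega>) t}"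
  proof (rule subsetI)
    fix \<omega> assume "\<omega> \<in> space M - (Bp \<union> Bm)"
    then have om: "\<omega> \<in> space M" and nb: "\<omega> \<notin> Bp" "\<omega> \<notin> Bm" by simp_all
    have "\<mu> \<in> CI_SN \<alpha> \<sigma> (\<lambda>i. lam i \<omega>) (\<lambda>i. X i \<omega>) t" for t
      unfolding CI_SN_def using notin[of 1 \<omega> t, OF _ om nb] notin[of "-1" \<omega> t, OF _ om nb] by simp
    then show "\<omega> \<in> {\<omega> \<in> space M. \<forall>t\<ge>1. \<mu> \<in> CI_SN \<alpha> \<sigma> (\<lambda>i. lam i \<omega>) (\<lambda>i. X i \<omega>) t}"
      using om by simp
  qed
  have "measure M (Bp \<union> Bm) \<le> measure M Bp + measure M Bm"
    by (rule measure_subadditive[OF BpM BmM]) auto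
  also have "\<dots> \<le> \<alpha> / 2 + \<alpha> / 2"
    using B_bound[of 1] B_bound[of "-1"] unfolding Bp_def Bm_def by (intro add_mono) auto
  finally have b: "measure M (Bp \<union> Bm) \<le> \<alpha>" by simp
  have "1 - \<alpha> \<le> measure M (space M - (Bp \<union> Bm))"
    using b finite_measure_compl[of "Bp \<union> Bm"] BpM BmM by (simp add: prob_space)
  also have "\<dots> \<le> measure M {\<omega> \<in> space M. \<forall>t\<ge>1. \<mu> \<in> CI_SN \<alpha> \<sigma> (\<lambda>i. lam i \<omega>) (\<lambda>i. X i \<omega>) t}"
    by (rule finite_measure_mono[OF sub GoodM])
  finally show ?thesis .
qed

end

theorem theorem2:
  fixes M :: "'a measure" and F :: "nat \<Rightarrow> 'a measure"
    and X lam :: "nat \<Rightarrow> 'a \<Rightarrow> real" and \<mu> \<sigma> \<alpha> :: real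
  assumes "prob_space M"
    and subalg: "\<And>t. subalgebra M (F t)"
    and filt: "\<And>s t. s \<le> t \<Longrightarrow> sets (F s) \<subseteq> sets (F t)"
    and triv: "sets (F 0) = {{}, space M}"
    and adapted: "\<And>t. t \<ge> 1 \<Longrightarrow> X t \<in> borel_measurable (F t)"
    and integ: "\<And>t. t \<ge> 1 \<Longrightarrow> integrable M (X t)"
    and mean: "\<And>t. t \<ge> 1 \<Longrightarrow> AE \<omega> in M. real_cond_exp M (F (t - 1)) (X t) \<omega> = \<mu>"
    and var: "\<And>t. t \<ge> 1 \<Longrightarrow>
       AE \<omega> in M. nn_cond_exp M (F (t - 1)) (\<lambda>\<omega>. ennreal ((X t \<omega> - \<mu>)\<^sup>2)) \<omega> \<le> ennreal (\<sigma>\<^sup>2)"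
    and alpha: "0 < \<alpha>" "\<alpha> < 1"
    and predictable: "\<And>t. t \<ge> 1 \<Longrightarrow> lam t \<in> borel_measurable (F (t - 1))"
  shows "measure M {\<omega> \<in> space M. \<forall>t\<ge>1. \<mu> \<in> CI_SN \<alpha> \<sigma> (\<lambda>i. lam i \<omega>) (\<lambda>i. X i \<omega>) t}
           \<ge> 1 - \<alpha>"
proof -
  interpret SNsetting M F X lam \<mu> \<sigma> \<alpha>
    by (rule SNsetting.intro[where M=M and F=F and X=X and lam=lam and \<mu>=\<mu> and \<sigma>=\<sigma> and \<alpha>=\<alpha>, OF assms(1) subalg filt adapted integ mean var alpha predictable])
  show ?thesis by (rule main)
qed

end
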